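(* Consider the random network with $n$ nodes in a typical configuration operated under Policy $\Sigma_n$ with fixed constants $p_\Delta,\alpha\in(0,1)$, $\Delta>0$. Then there is a constant $c>0$ independent of $n$ such that: (a) in any sub-slot A in which nodes S (a source) and R are neighbors, S transmits a packet to R successfully with probability at least $c$; (b) in any sub-slot B in which nodes R and D (a destination) are neighbors, R transmits a packet to D successfully with probability at least $c$.
   Context: $S^2$ is the unit-area sphere in $\mathbb R^3$. There are $n$ nodes, randomly split into $n/2$ source-destination pairs. Each node $i$ has an independent uniformly random great circle $G_i$ (great circle $G(x)$ perpendicular to the diameter through a uniformly random point $x\in S^2$), carrying $\sqrt n$ equidistant lattice points forming a discrete torus of size $\sqrt n$; each node moves independently by a natural random walk on these points (uniform initial position; each step stays, moves $-1$, or moves $+1$ mod $\sqrt n$, each with probability $1/3$). Time is slotted. Relaxed Protocol model: a transmission from $i$ to $j$ succeeds if every other simultaneous transmitter $k$ satisfies $d(k,j)\ge(1+\Delta)d(i,j)$, $d$ the distance on the sphere. For $i\ne j$, $z_{ij}$ is one of the two points of $G_i\cap G_j$ chosen uniformly at random, and ${\cal C}_{ij}$ is the disk of radius $(2+\Delta)\sqrt{\pi/n}$ centered at $z_{ij}$. The configuration is typical if the number of great circles passing through each ${\cal C}_{ij}$ is $\Theta(\sqrt n)$. Nodes $i,j$ are neighbors at a time if both are at the lattice points on their circles closest to $z_{ij}$. Policy $\Sigma_n$: each slot has sub-slots A and B. In sub-slot A, each source independently becomes active with probability $p_\Delta$; an active source with at least one neighbor, with probability $\alpha$, picks a neighbor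 uniformly at random and transmits to it a packet for its destination. In sub-slot B, each node independently becomes active with probability $p_\Delta$; an active node having neighbors that are destination nodes picks one uniformly at random and transmits to it a packet for that destination if it has one (FIFO). *)

theory Defs
  imports "HOL-Analysis.Analysis" "HOL-Probability.Probability"
begin

type_synonym pt = "real ^ 3"

text \<open>Radius of the unit-area sphere: 4 pi rho^2 = 1.\<close>
definition rho :: real where "rho = 1 / (2 * sqrt pi)"

definition sphere2 :: "pt set" where "sphere2 = {y. norm y = rho}"

definition sdist :: "pt \<Rightarrow> pt \<Rightarrow> real" where
  "sdist a b = rho * arccos ((a \<bullet> b) / rho\<^sup>2)"

definition great_circle :: "pt \<Rightarrow> pt set" where
  "great_circle x = {y. norm y = rho \<and> y \<bullet> x = 0}"

definition sdisk :: "pt \<Rightarrow> real \<Rightarrow> pt set" where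
  "sdisk z r = {y \<in> sphere2. sdist y z \<le> r}"

definition lattice_pt :: "nat \<Rightarrow> pt \<Rightarrow> pt \<Rightarrow> nat \<Rightarrow> pt" where
  "lattice_pt m u v k =
     rho *\<^sub>R (cos (2 * pi * real k / real m) *\<^sub>R u + sin (2 * pi * real k / real m) *\<^sub>R v)"

definition walk_step :: "nat \<Rightarrow> nat \<Rightarrow> nat pmf" where
  "walk_step m k = map_pmf (\<lambda>d. (k + m - 1 + d) mod m) (pmf_of_set {0, 1, 2::nat})"

fun walk_pmf :: "nat \<Rightarrow> nat \<Rightarrow> nat pmf" where
  "walk_pmf m 0 = pmf_of_set {..<m}"
| "walk_pmf m (Suc t) = bind_pmf (walk_pmf m t) (walk_step m)"

definition positions_pmf :: "nat \<Rightarrow> nat \<Rightarrow> nat \<Rightarrow> (nat \<Rightarrow> nat) pmf" where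
  "positions_pmf n m t = Pi_pmf {..<n} 0 (\<lambda>i. walk_pmf m t)"

text \<open>A configuration: node i has great circle G(x i), carrying lattice points with
  orthonormal frame (u i, v i) spanning the plane perpendicular to x i; z i j is one of
  the two points of G_i \<inter> G_j (symmetric); Src are the sources and dst the pairing.\<close>
definition config :: "nat \<Rightarrow> (nat \<Rightarrow> pt) \<Rightarrow> (nat \<Rightarrow> pt) \<Rightarrow> (nat \<Rightarrow> pt)
     \<Rightarrow> (nat \<Rightarrow> nat \<Rightarrow> pt) \<Rightarrow> nat set \<Rightarrow> (nat \<Rightarrow> nat) \<Rightarrow> bool" where
  "config n x u v z Src dst \<longleftrightarrow>
     (\<forall>i<n. norm (x i) = rho \<and> norm (u i) = 1 \<and> norm (v i) = 1 \<and> u i \<bullet> v i = 0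
            \<and> u i \<bullet> x i = 0 \<and> v i \<bullet> x i = 0)
   \<and> (\<forall>i<n. \<forall>j<n. i \<noteq> j \<longrightarrow> z i j \<in> great_circle (x i) \<inter> great_circle (x j) \<and> z i j = z j i)
   \<and> Src \<subseteq> {..<n} \<and> card Src = n div 2
   \<and> bij_betw dst Src ({..<n} - Src)"

text \<open>Typical configuration: the number of great circles through each C_ij is
  between K1 sqrt n and K2 sqrt n (Theta(sqrt n) with constants K1, K2).\<close>
definition typical :: "real \<Rightarrow> real \<Rightarrow> real \<Rightarrow> nat \<Rightarrow> (nat \<Rightarrow> pt) \<Rightarrow> (nat \<Rightarrow> nat \<Rightarrow> pt) \<Rightarrow> bool" where
  "typical K1 K2 \<Delta> n x z \<longleftrightarrow>
     (\<forall>i<n. \<forall>j<n. i \<noteq> j \<longrightarrow>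
        (let N = card {k. k < n \<and> great_circle (x k) \<inter> sdisk (z i j) ((2 + \<Delta>) * sqrt (pi / n)) \<noteq> {}}
         in K1 * sqrt n \<le> real N \<and> real N \<le> K2 * sqrt n))"

definition loc :: "nat \<Rightarrow> (nat \<Rightarrow> pt) \<Rightarrow> (nat \<Rightarrow> pt) \<Rightarrow> nat \<Rightarrow> nat \<Rightarrow> pt" where
  "loc m u v i p = lattice_pt m (u i) (v i) p"

definition closest :: "nat \<Rightarrow> (nat \<Rightarrow> pt) \<Rightarrow> (nat \<Rightarrow> pt) \<Rightarrow> nat \<Rightarrow> nat \<Rightarrow> pt \<Rightarrow> bool" where
  "closest m u v i p w \<longleftrightarrow> p < m \<and> (\<forall>q<m. sdist (loc m u v i p) w \<le> sdist (loc m u v i q) w)"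

definition neighbors :: "nat \<Rightarrow> (nat \<Rightarrow> pt) \<Rightarrow> (nat \<Rightarrow> pt) \<Rightarrow> (nat \<Rightarrow> nat \<Rightarrow> pt)
     \<Rightarrow> (nat \<Rightarrow> nat) \<Rightarrow> nat \<Rightarrow> nat \<Rightarrow> bool" where
  "neighbors m u v z pos i j \<longleftrightarrow>
     i \<noteq> j \<and> closest m u v i (pos i) (z i j) \<and> closest m u v j (pos j) (z i j)"

text \<open>Sub-slot A: action of node k (None = silent, Some j = transmits to j).\<close>
definition actionA :: "real \<Rightarrow> real \<Rightarrow> nat \<Rightarrow> nat \<Rightarrow> (nat \<Rightarrow> pt) \<Rightarrow> (nat \<Rightarrow> pt)
     \<Rightarrow> (nat \<Rightarrow> nat \<Rightarrow> pt) \<Rightarrow> nat set \<Rightarrow> (nat \<Rightarrow> nat) \<Rightarrow> nat \<Rightarrow> nat option pmf" where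
  "actionA pD \<alpha> n m u v z Src pos k =
     (if k \<notin> Src then return_pmf None else
      do { act \<leftarrow> bernoulli_pmf pD;
           let N = {j. j < n \<and> neighbors m u v z pos k j};
           if act \<and> N \<noteq> {} then
             do { a \<leftarrow> bernoulli_pmf \<alpha>;
                  if a then map_pmf Some (pmf_of_set N) else return_pmf None }
           else return_pmf None })"

definition actionB :: "real \<Rightarrow> nat \<Rightarrow> nat \<Rightarrow> (nat \<Rightarrow> pt) \<Rightarrow> (nat \<Rightarrow> pt)
     \<Rightarrow> (nat \<Rightarrow> nat \<Rightarrow> pt) \<Rightarrow> nat set \<Rightarrow> (nat \<Rightarrow> nat) \<Rightarrow> nat \<Rightarrow> nat option pmf" where
  "actionB pD n m u v z Src pos k =
     do { act \<leftarrow> bernoulli_pmf pD;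
          let N = {d. d < n \<and> d \<notin> Src \<and> neighbors m u v z pos k d};
          if act \<and> N \<noteq> {} then map_pmf Some (pmf_of_set N) else return_pmf None }"

definition slot_pmf :: "nat \<Rightarrow> nat \<Rightarrow> nat \<Rightarrow> ((nat \<Rightarrow> nat) \<Rightarrow> nat \<Rightarrow> nat option pmf)
     \<Rightarrow> ((nat \<Rightarrow> nat) \<times> (nat \<Rightarrow> nat option)) pmf" where
  "slot_pmf n m t act =
     do { pos \<leftarrow> positions_pmf n m t;
          a \<leftarrow> Pi_pmf {..<n} None (act pos);
          return_pmf (pos, a) }"

definition protocol_ok :: "real \<Rightarrow> nat \<Rightarrow> nat \<Rightarrow> (nat \<Rightarrow> pt) \<Rightarrow> (nat \<Rightarrow> pt) \<Rightarrow> (nat \<Rightarrow> nat)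
     \<Rightarrow> (nat \<Rightarrow> bool) \<Rightarrow> nat \<Rightarrow> nat \<Rightarrow> bool" where
  "protocol_ok \<Delta> n m u v pos Tx i j \<longleftrightarrow>
     (\<forall>k<n. k \<noteq> i \<and> Tx k \<longrightarrow>
        sdist (loc m u v k (pos k)) (loc m u v j (pos j))
          \<ge> (1 + \<Delta>) * sdist (loc m u v i (pos i)) (loc m u v j (pos j)))"

end

theory Submission
  imports Defs
begin


lemma rho_pos: "rho > 0" by (simp add: rho_def)

lemma ip_bound:
  fixes a b :: pt
  assumes "norm a = rho" "norm b = rho"
  shows "-1 \<le> (a \<bullet> b) / rho\<^sup>2 \<and> (a \<bullet> b) / rho\<^sup>2 \<le> 1"
proof -
  have h: "\<bar>a \<bullet> b\<bar> \<le> rho\<^sup>2" using Cauchy_Schwarz_ineq2[of a b] assms by (simp add: power2_eq_square)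
  have p: "rho\<^sup>2 > 0" using rho_pos by simp
  have "a \<bullet> b / rho\<^sup>2 \<le> 1" using p abs_le_D1[OF h] by (simp add: divide_le_eq)
  moreover have "-1 \<le> a \<bullet> b / rho\<^sup>2" using p abs_le_D2[OF h] by (simp add: le_divide_eq)
  ultimately show ?thesis by simp
qed

lemma sdist_nonneg: "norm a = rho \<Longrightarrow> norm b = rho \<Longrightarrow> 0 \<le> sdist a b"
  using ip_bound[of a b] rho_pos unfolding sdist_def by (intro mult_nonneg_nonneg arccos_lbound) auto

lemma sdist_sym: "sdist a b = sdist b a"
  unfolding sdist_def by (simp add: inner_commute)

lemma sdist_refl: "norm a = rho \<Longrightarrow> sdist a a = 0"
  unfolding sdist_def using rho_pos by (simp add: power2_norm_eq_inner[symmetric])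

lemma one_minus_cos_le: "1 - cos (t::real) \<le> t\<^sup>2 / 2"
proof -
  have "cos t = cos (2 * (t/2))" by simp
  also have "\<dots> = 1 - 2 * (sin (t/2))\<^sup>2" by (rule cos_double_sin)
  finally have "1 - cos t = 2 * (sin (t/2))\<^sup>2" by simp
  also have "(sin (t/2))\<^sup>2 \<le> (t/2)\<^sup>2"
    using abs_sin_x_le_abs_x[of "t/2"] by (metis abs_ge_zero power2_abs power_mono)
  finally show ?thesis by (simp add: power2_eq_square)
qed

lemma chord_le_sdist:
  fixes a b :: pt
  assumes "norm a = rho" "norm b = rho"
  shows "norm (a - b) \<le> sdist a b"
proof -
  define c where "c = (a \<bullet> b) / rho\<^sup>2"
  define th where "th = arccos c"
  have c1: "-1 \<le> c" "c \<le> 1" using ip_bound[OF assms] unfolding c_def by auto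
  have cth: "cos th = c" unfolding th_def using c1 by simp
  have th0: "0 \<le> th" unfolding th_def using c1 by (simp add: arccos_lbound)
  have "(norm (a - b))\<^sup>2 = a \<bullet> a - 2 * (a \<bullet> b) + b \<bullet> b"
    by (simp add: power2_norm_eq_inner inner_diff_left inner_diff_right inner_commute)
  also have "\<dots> = 2 * rho\<^sup>2 * (1 - c)"
    using assms rho_pos unfolding c_def by (simp add: power2_norm_eq_inner[symmetric] field_simps)
  also have "\<dots> \<le> 2 * rho\<^sup>2 * (th\<^sup>2/2)"
    using one_minus_cos_le[of th] cth by (intro mult_left_mono) auto
  also have "\<dots> = (rho * th)\<^sup>2" by (simp add: power_mult_distrib)
  finally have "(norm (a - b))\<^sup>2 \<le> (rho * th)\<^sup>2" .
  moreover have "0 \<le> rho * th" using rho_pos th0 by simp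
  ultimately have "norm (a - b) \<le> rho * th" using power2_le_imp_le by blast
  then show ?thesis unfolding sdist_def th_def c_def .
qed

lemma arccos_tri:
  fixes a b c :: "'a::real_inner"
  assumes "norm a = 1" "norm b = 1" "norm c = 1"
  shows "arccos (a \<bullet> c) \<le> arccos (a \<bullet> b) + arccos (b \<bullet> c)"
proof -
  have bnd: "\<bar>x \<bullet> y\<bar> \<le> 1" if "norm x = 1" "norm y = 1" for x y :: 'a
    using Cauchy_Schwarz_ineq2[of x y] that by simp
  define al where "al = arccos (a \<bullet> b)"
  define be where "be = arccos (b \<bullet> c)"
  have ab: "\<bar>a \<bullet> b\<bar> \<le> 1" and bc: "\<bar>b \<bullet> c\<bar> \<le> 1" and ac: "\<bar>a \<bullet> c\<bar> \<le> 1"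
    using bnd assms by auto
  have ca: "cos al = a \<bullet> b" unfolding al_def using ab by simp
  have cb: "cos be = b \<bullet> c" unfolding be_def using bc by simp
  have sa: "sin al = sqrt (1 - (a \<bullet> b)\<^sup>2)" unfolding al_def using ab by (simp add: sin_arccos)
  have sb: "sin be = sqrt (1 - (b \<bullet> c)\<^sup>2)" unfolding be_def using bc by (simp add: sin_arccos)
  define a' where "a' = a - (a \<bullet> b) *\<^sub>R b"
  define c' where "c' = c - (b \<bullet> c) *\<^sub>R b"
  have bb: "b \<bullet> b = 1" using assms by (simp add: power2_norm_eq_inner[symmetric])
  have aa: "a \<bullet> a = 1" using assms by (simp add: power2_norm_eq_inner[symmetric])
  have cc: "c \<bullet> c = 1" using assms by (simp add: power2_norm_eq_inner[symmetric])
  have e1: "a \<bullet> c = a' \<bullet> c' + (a \<bullet> b) * (b \<bullet> c)"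
    unfolding a'_def c'_def by (simp add: inner_diff_left inner_diff_right bb inner_commute algebra_simps)
  have na: "(norm a')\<^sup>2 = 1 - (a \<bullet> b)\<^sup>2"
    unfolding a'_def power2_norm_eq_inner by (simp add: inner_diff_left inner_diff_right bb aa inner_commute algebra_simps power2_eq_square)
  have nc: "(norm c')\<^sup>2 = 1 - (b \<bullet> c)\<^sup>2"
    unfolding c'_def power2_norm_eq_inner by (simp add: inner_diff_left inner_diff_right bb cc inner_commute algebra_simps power2_eq_square)
  have "norm a' = sqrt (1 - (a \<bullet> b)\<^sup>2)" using na by (metis norm_ge_zero real_sqrt_unique)
  moreover have "norm c' = sqrt (1 - (b \<bullet> c)\<^sup>2)" using nc by (metis norm_ge_zero real_sqrt_unique)
  moreover have "- (norm a' * norm c') \<le> a' \<bullet> c'" using Cauchy_Schwarz_ineq2[of a' c'] by linarith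
  ultimately have "a' \<bullet> c' \<ge> - (sin al * sin be)"
    using sa sb by simp
  hence key: "a \<bullet> c \<ge> cos (al + be)" using e1 ca cb by (simp add: cos_add)
  have al0: "0 \<le> al" "al \<le> pi" unfolding al_def using ab by (auto intro: arccos_lbound arccos_ubound)
  have be0: "0 \<le> be" "be \<le> pi" unfolding be_def using bc by (auto intro: arccos_lbound arccos_ubound)
  show ?thesis
  proof (cases "al + be \<le> pi")
    case True
    have "arccos (a \<bullet> c) \<le> arccos (cos (al + be))"
      using key ac by (subst arccos_le_mono) auto
    also have "\<dots> = al + be" using True al0 be0 by (simp add: arccos_cos)
    finally show ?thesis unfolding al_def be_def .
  next
    case False
    then show ?thesis using arccos_ubound[of "a \<bullet> c"] ac unfolding al_def be_def by (auto simp: abs_le_iff)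
  qed
qed

lemma sdist_unit: 
  fixes a b :: pt
  shows "sdist a b = rho * arccos ((a /\<^sub>R rho) \<bullet> (b /\<^sub>R rho))"
proof -
  have "(a /\<^sub>R rho) \<bullet> (b /\<^sub>R rho) = (a \<bullet> b) / rho\<^sup>2" by (simp add: power2_eq_square divide_inverse)
  then show ?thesis unfolding sdist_def by simp
qed

lemma sdist_tri:
  fixes a b c :: pt
  assumes "norm a = rho" "norm b = rho" "norm c = rho"
  shows "sdist a c \<le> sdist a b + sdist b c"
proof -
  have n: "norm (x /\<^sub>R rho) = 1" if "norm x = rho" for x :: pt using that rho_pos by simp
  have "rho * arccos ((a /\<^sub>R rho) \<bullet> (c /\<^sub>R rho)) \<le> rho * (arccos ((a /\<^sub>R rho) \<bullet> (b /\<^sub>R rho)) + arccos ((b /\<^sub>R rho) \<bullet> (c /\<^sub>R rho)))"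
    using arccos_tri[OF n n n, OF assms] rho_pos by (intro mult_left_mono) auto
  then show ?thesis unfolding sdist_unit by (simp add: distrib_left)
qed


definition frame :: "pt \<Rightarrow> pt \<Rightarrow> pt \<Rightarrow> bool" where
  "frame x u v \<longleftrightarrow> norm x = rho \<and> norm u = 1 \<and> norm v = 1 \<and> u \<bullet> v = 0 \<and> u \<bullet> x = 0 \<and> v \<bullet> x = 0"

lemma frame_decomp:
  fixes x u v y :: pt
  assumes fr: "frame x u v" and yx: "y \<bullet> x = 0"
  shows "y = (y \<bullet> u) *\<^sub>R u + (y \<bullet> v) *\<^sub>R v"
proof (rule ccontr)
  have nx: "norm x = rho" and nu: "norm u = 1" and nv: "norm v = 1" and uv: "u \<bullet> v = 0"
    and ux: "u \<bullet> x = 0" and vx: "v \<bullet> x = 0" using fr unfolding frame_def by auto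
  have uu: "u \<bullet> u = 1" using nu by (simp add: power2_norm_eq_inner[symmetric])
  have vv: "v \<bullet> v = 1" using nv by (simp add: power2_norm_eq_inner[symmetric])
  have xx: "x \<bullet> x = rho\<^sup>2" using nx by (simp add: power2_norm_eq_inner[symmetric])
  have xx0: "x \<bullet> x \<noteq> 0" using xx rho_pos by simp
  define w where "w = y - (y \<bullet> u) *\<^sub>R u - (y \<bullet> v) *\<^sub>R v"
  assume "y \<noteq> (y \<bullet> u) *\<^sub>R u + (y \<bullet> v) *\<^sub>R v"
  then have w0: "w \<noteq> 0" unfolding w_def by (auto simp: algebra_simps)
  have wu: "w \<bullet> u = 0" unfolding w_def by (simp add: inner_diff_left uu inner_commute[of v u] uv)
  have wv: "w \<bullet> v = 0" unfolding w_def by (simp add: inner_diff_left vv uv)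
  have wx: "w \<bullet> x = 0" unfolding w_def by (simp add: inner_diff_left ux vx yx)
  define S where "S = {u, v, x, w}"
  have po: "pairwise orthogonal S" unfolding S_def pairwise_def orthogonal_def
    using uv ux vx wu wv wx by (auto simp: inner_commute)
  have u0: "u \<noteq> 0" using nu by auto
  have v0: "v \<noteq> 0" using nv by auto
  have x0: "x \<noteq> 0" using xx0 by auto
  have "0 \<notin> S" unfolding S_def using u0 v0 x0 w0 by auto
  then have "independent S" using po pairwise_orthogonal_independent by blast
  then have cS: "card S \<le> 3" using independent_bound[of S] by simp
  have d1: "u \<noteq> v" using uv uu by auto
  have d2: "u \<noteq> x" using ux uu by auto
  have d3: "u \<noteq> w" using wu uu by (auto simp: inner_commute)
  have d4: "v \<noteq> x" using vx vv by auto
  have d5: "v \<noteq> w" using wv vv by (auto simp: inner_commute)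
  have d6: "x \<noteq> w" using wx xx0 by auto
  have "card S = 4" unfolding S_def using d1 d2 d3 d4 d5 d6 by simp
  then show False using cS by simp
qed

lemma on_circle:
  fixes x u v z :: pt
  assumes fr: "frame x u v" and z: "z \<in> great_circle x"
  obtains th where "z = rho *\<^sub>R (cos th *\<^sub>R u + sin th *\<^sub>R v)"
proof -
  have nu: "norm u = 1" and nv: "norm v = 1" and uv: "u \<bullet> v = 0" using fr unfolding frame_def by auto
  have uu: "u \<bullet> u = 1" using nu by (simp add: power2_norm_eq_inner[symmetric])
  have vv: "v \<bullet> v = 1" using nv by (simp add: power2_norm_eq_inner[symmetric])
  have zx: "z \<bullet> x = 0" and nz: "norm z = rho" using z unfolding great_circle_def by auto
  define a where "a = z \<bullet> u"
  define b where "b = z \<bullet> v"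
  have zd: "z = a *\<^sub>R u + b *\<^sub>R v" unfolding a_def b_def by (rule frame_decomp[OF fr zx])
  have "rho\<^sup>2 = z \<bullet> z" by (metis nz power2_norm_eq_inner)
  also have "\<dots> = a\<^sup>2 + b\<^sup>2" unfolding zd
    by (simp add: inner_add_left inner_add_right uu vv uv inner_commute[of v u] power2_eq_square)
  finally have e: "rho\<^sup>2 = a\<^sup>2 + b\<^sup>2" .
  have "(a / rho)\<^sup>2 + (b / rho)\<^sup>2 = (a\<^sup>2 + b\<^sup>2) / rho\<^sup>2" by (simp add: power_divide add_divide_distrib)
  also have "\<dots> = 1" using e rho_pos by (metis divide_self less_numeral_extra(3) zero_less_power)
  finally have "(a / rho)\<^sup>2 + (b / rho)\<^sup>2 = 1" .
  then obtain t where t: "a / rho = cos t" "b / rho = sin t" by (rule sincos_total_2pi) auto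
  have "z = rho *\<^sub>R (cos t *\<^sub>R u + sin t *\<^sub>R v)" unfolding zd t[symmetric] using rho_pos
    by (simp add: scaleR_add_right)
  then show ?thesis by (rule that)
qed

lemma lattice_inner:
  assumes fr: "frame x u v"
  shows "lattice_pt m u v p \<bullet> (rho *\<^sub>R (cos th *\<^sub>R u + sin th *\<^sub>R v)) = rho\<^sup>2 * cos (2 * pi * real p / real m - th)"
proof -
  have nu: "norm u = 1" and nv: "norm v = 1" and uv: "u \<bullet> v = 0" using fr unfolding frame_def by auto
  have uu: "u \<bullet> u = 1" using nu by (simp add: power2_norm_eq_inner[symmetric])
  have vv: "v \<bullet> v = 1" using nv by (simp add: power2_norm_eq_inner[symmetric])
  have vu: "v \<bullet> u = 0" using uv by (simp add: inner_commute)
  have g: "(r *\<^sub>R (A *\<^sub>R u + B *\<^sub>R v)) \<bullet> (r *\<^sub>R (C *\<^sub>R u + D *\<^sub>R v)) = r * r * (A * C + B * D)" for r A B C D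
    by (simp add: inner_add_left inner_add_right uu vv uv vu distrib_left)
  show ?thesis unfolding lattice_pt_def g by (simp add: cos_diff power2_eq_square)
qed

lemma lattice_norm:
  assumes fr: "frame x u v"
  shows "norm (lattice_pt m u v p) = rho"
proof -
  have "lattice_pt m u v p \<bullet> lattice_pt m u v p = rho\<^sup>2 * cos (2 * pi * real p / real m - 2 * pi * real p / real m)"
    using lattice_inner[OF fr, of m p "2 * pi * real p / real m"] unfolding lattice_pt_def .
  then have "(norm (lattice_pt m u v p))\<^sup>2 = rho\<^sup>2" by (simp add: power2_norm_eq_inner)
  then show ?thesis using rho_pos power2_eq_imp_eq[of "norm (lattice_pt m u v p)" rho] by simp
qed

lemma lattice_circle:
  assumes fr: "frame x u v"
  shows "lattice_pt m u v p \<in> great_circle x"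
proof -
  have "u \<bullet> x = 0" "v \<bullet> x = 0" using fr unfolding frame_def by auto
  then show ?thesis using lattice_norm[OF fr] unfolding great_circle_def lattice_pt_def
    by (simp add: inner_add_left)
qed

lemma arccos_cos_abs: "\<bar>y\<bar> \<le> pi \<Longrightarrow> arccos (cos y) = \<bar>y\<bar>"
  by (metis abs_ge_zero arccos_cos cos_abs_real)

lemma exists_near:
  assumes m: "m > 0"
  shows "\<exists>p<m. arccos (cos (2 * pi * real p / real m - th)) \<le> pi / real m"
proof -
  define k where "k = \<lfloor>th * real m / (2 * pi) + 1/2\<rfloor>"
  have k1: "real_of_int k \<le> th * real m / (2 * pi) + 1/2" unfolding k_def by linarith
  have k2: "th * real m / (2 * pi) + 1/2 < real_of_int k + 1" unfolding k_def by linarith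
  define y where "y = 2 * pi * real_of_int k / real m - th"
  have mp: "real m > 0" using m by simp
  have "2 * pi * real_of_int k \<le> th * real m + pi" using k1 pi_gt_zero by (simp add: field_simps)
  have yd: "y = (2 * pi * real_of_int k - th * real m) / real m" unfolding y_def using mp by (simp add: field_simps)
  have y1: "y \<le> pi / real m" unfolding yd using mp \<open>2 * pi * real_of_int k \<le> th * real m + pi\<close>
    by (intro divide_right_mono) auto
  have "th * real m - pi < 2 * pi * real_of_int k" using k2 pi_gt_zero by (simp add: field_simps)
  then have "(- pi) / real m \<le> y" unfolding yd using mp by (intro divide_right_mono) auto
  then have y2: "- (pi / real m) \<le> y" by simp
  have ay: "\<bar>y\<bar> \<le> pi / real m" using y1 y2 by simp
  also have "\<dots> \<le> pi / 1" using m by (intro divide_left_mono) auto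
  finally have aypi: "\<bar>y\<bar> \<le> pi" by simp
  define p where "p = nat (k mod int m)"
  have pm: "p < m" unfolding p_def using m by (simp add: nat_less_iff)
  have h: "k mod int m = k - int m * (k div int m)" by (simp add: minus_div_mult_eq_mod[symmetric])
  have nn: "0 \<le> k mod int m" using m by simp
  have "real p = real_of_int (k mod int m)" unfolding p_def using nn by simp
  also have "\<dots> = real_of_int (k - int m * (k div int m))" by (simp only: h)
  also have "\<dots> = real_of_int k - real m * real_of_int (k div int m)" by simp
  finally have rp: "real p = real_of_int k - real m * real_of_int (k div int m)" .
  have "2 * pi * real p / real m - th = y - 2 * pi * real_of_int (k div int m)"
    unfolding rp y_def using mp by (simp add: field_simps)
  then have "cos (2 * pi * real p / real m - th) = cos y"
    by (simp add: cos_diff)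
  then have "arccos (cos (2 * pi * real p / real m - th)) = \<bar>y\<bar>" using arccos_cos_abs[OF aypi] by simp
  then show ?thesis using pm ay by auto
qed

lemma closest_near:
  assumes fr: "frame (x k) (u k) (v k)" and z: "z \<in> great_circle (x k)" and m: "m > 0"
    and cl: "closest m u v k p z"
  shows "sdist (loc m u v k p) z \<le> rho * pi / real m"
proof -
  obtain th where zt: "z = rho *\<^sub>R (cos th *\<^sub>R u k + sin th *\<^sub>R v k)" using on_circle[OF fr z] by blast
  obtain q where q: "q < m" "arccos (cos (2 * pi * real q / real m - th)) \<le> pi / real m"
    using exists_near[OF m] by blast
  have "sdist (loc m u v k p) z \<le> sdist (loc m u v k q) z" using cl q(1) unfolding closest_def by auto
  also have "\<dots> = rho * arccos (cos (2 * pi * real q / real m - th))"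
    unfolding sdist_def loc_def zt lattice_inner[OF fr] using rho_pos by simp
  also have "\<dots> \<le> rho * (pi / real m)" using q(2) rho_pos by (intro mult_left_mono) auto
  finally show ?thesis by simp
qed


lemma sin_lower:
  fixes y :: real
  assumes "0 \<le> y" "y \<le> 2"
  shows "y / 3 \<le> sin y"
proof -
  have "\<bar>sin y - (\<Sum>k<3. sin_coeff k * y ^ k)\<bar> \<le> inverse (fact 3) * \<bar>y\<bar> ^ 3"
    by (rule Maclaurin_sin_bound)
  moreover have "(\<Sum>k<3. sin_coeff k * y ^ k) = y"
    by (simp add: eval_nat_numeral sin_coeff_def)
  moreover have "inverse (fact 3) * \<bar>y\<bar> ^ 3 = y * y\<^sup>2 / 6"
    using assms by (simp add: eval_nat_numeral fact_numeral power2_eq_square)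
  ultimately have "y - y * y\<^sup>2 / 6 \<le> sin y" by linarith
  moreover have "y * y\<^sup>2 \<le> y * 4"
    using assms by (intro mult_left_mono) (auto simp: power2_eq_square intro: mult_mono[of y 2 y 2, simplified])
  ultimately show ?thesis by linarith
qed

lemma chord_lattice:
  assumes fr: "frame x u v"
  shows "norm (lattice_pt m u v p - lattice_pt m u v q) = 2 * rho * \<bar>sin (pi * (real p - real q) / real m)\<bar>"
proof -
  define a where "a = 2 * pi * real p / real m"
  define b where "b = 2 * pi * real q / real m"
  define t where "t = pi * (real p - real q) / real m"
  have ab: "a - b = 2 * t" unfolding a_def b_def t_def by (cases "m = 0") (simp_all add: field_simps)
  have Lq: "lattice_pt m u v q = rho *\<^sub>R (cos b *\<^sub>R u + sin b *\<^sub>R v)" unfolding lattice_pt_def b_def ..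
  have Lp: "lattice_pt m u v p = rho *\<^sub>R (cos a *\<^sub>R u + sin a *\<^sub>R v)" unfolding lattice_pt_def a_def ..
  have pp: "lattice_pt m u v p \<bullet> lattice_pt m u v p = rho\<^sup>2"
    using lattice_norm[OF fr, of m p] by (simp add: power2_norm_eq_inner[symmetric])
  have qq: "lattice_pt m u v q \<bullet> lattice_pt m u v q = rho\<^sup>2"
    using lattice_norm[OF fr, of m q] by (simp add: power2_norm_eq_inner[symmetric])
  have pq: "lattice_pt m u v p \<bullet> lattice_pt m u v q = rho\<^sup>2 * cos (a - b)"
    unfolding Lq using lattice_inner[OF fr, of m p b] unfolding a_def by simp
  have "(norm (lattice_pt m u v p - lattice_pt m u v q))\<^sup>2
      = lattice_pt m u v p \<bullet> lattice_pt m u v p - 2 * (lattice_pt m u v p \<bullet> lattice_pt m u v q) + lattice_pt m u v q \<bullet> lattice_pt m u v q"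
    by (simp add: power2_norm_eq_inner inner_diff_left inner_diff_right inner_commute)
  also have "\<dots> = 2 * rho\<^sup>2 * (1 - cos (2 * t))" unfolding pp qq pq ab by (simp add: algebra_simps)
  also have "\<dots> = (2 * rho * \<bar>sin t\<bar>)\<^sup>2" by (simp add: cos_double_sin power_mult_distrib)
  finally have "(norm (lattice_pt m u v p - lattice_pt m u v q))\<^sup>2 = (2 * rho * \<bar>sin t\<bar>)\<^sup>2" .
  then have "norm (lattice_pt m u v p - lattice_pt m u v q) = 2 * rho * \<bar>sin t\<bar>"
    by (rule power2_eq_imp_eq) (use rho_pos in auto)
  then show ?thesis unfolding t_def .
qed

lemma index_close:
  assumes fr: "frame x u v" and m: "m > 0" and p: "p < m" and q: "q < m"
    and d: "norm (lattice_pt m u v p - lattice_pt m u v q) \<le> d"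
  shows "\<exists>e. ((q \<le> p \<and> e = p - q) \<or> (p < q \<and> e = q - p)) \<and> (real e \<le> d * real m / rho \<or> real (m - e) \<le> d * real m / rho) \<and> e < m"
proof -
  define e where "e = (if q \<le> p then p - q else q - p)"
  have em: "e < m" unfolding e_def using p q by auto
  have mp: "real m > 0" using m by simp
  have se: "\<bar>sin (pi * (real p - real q) / real m)\<bar> = sin (pi * real e / real m)"
  proof (cases "q \<le> p")
    case True
    then have "real p - real q = real e" unfolding e_def by simp
    moreover have "0 \<le> sin (pi * real e / real m)" using em mp
      by (intro sin_ge_zero) (auto simp: field_simps)
    ultimately show ?thesis by simp
  next
    case False
    then have "real p - real q = - real e" unfolding e_def by simp
    moreover have "0 \<le> sin (pi * real e / real m)" using em mp
      by (intro sin_ge_zero) (auto simp: field_simps)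
    ultimately show ?thesis by simp
  qed
  have ch: "2 * rho * sin (pi * real e / real m) \<le> d" using d chord_lattice[OF fr, of m p q] se by simp
  have key: "real f \<le> d * real m / rho" if f2: "2 * f \<le> m" and sf: "sin (pi * real f / real m) = sin (pi * real e / real m)" for f
  proof -
    define y where "y = pi * real f / real m"
    have y0: "0 \<le> y" unfolding y_def using mp by simp
    have "y \<le> pi * (real m / 2) / real m" unfolding y_def using f2 mp
      by (intro divide_right_mono mult_left_mono) auto
    also have "\<dots> = pi / 2" using mp by simp
    finally have y2: "y \<le> 2" using pi_less_4 by simp
    have "y / 3 \<le> sin y" using sin_lower[OF y0 y2] .
    moreover have "2 * real f / real m \<le> y" unfolding y_def using pi_ge_two mp
      by (intro divide_right_mono mult_right_mono) auto
    then have "2 * real f / real m / 3 \<le> y / 3" by (rule divide_right_mono) simp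
    ultimately have "2 * real f / real m / 3 \<le> sin y" by linarith
    then have "2 * rho * (2 * real f / real m / 3) \<le> d" using ch sf rho_pos unfolding y_def
      by (smt (verit) mult_left_mono)
    then have "real f * (4 * rho) \<le> d * real m * 3" using mp by (simp add: field_simps)
    moreover have "0 \<le> real f * rho" using rho_pos by simp
    ultimately have "real f * rho \<le> d * real m" by linarith
    then show ?thesis using rho_pos by (simp add: field_simps)
  qed
  show ?thesis
  proof (cases "2 * e \<le> m")
    case True
    then show ?thesis using key[of e] em unfolding e_def by (auto split: if_splits)
  next
    case False
    have "sin (pi * real (m - e) / real m) = sin (pi - pi * real e / real m)"
      using em mp by (simp add: of_nat_diff field_simps)
    then have "real (m - e) \<le> d * real m / rho" using False by (intro key) auto
    then show ?thesis using em unfolding e_def by (auto split: if_splits)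
  qed
qed


lemma count_ball:
  assumes fr: "frame x u v" and m: "m > 0" and r: "r \<ge> 0"
  shows "real (card {p. p < m \<and> norm (lattice_pt m u v p - w) \<le> r}) \<le> 8 * r * real m / rho + 2"
proof (cases "{p. p < m \<and> norm (lattice_pt m u v p - w) \<le> r} = {}")
  case True
  have "0 \<le> 8 * r * real m / rho" using r rho_pos by simp
  then show ?thesis unfolding True by simp
next
  case False
  then obtain p0 where p0: "p0 < m" "norm (lattice_pt m u v p0 - w) \<le> r" by auto
  define D where "D = 2 * r * real m / rho"
  define K where "K = nat \<lfloor>D\<rfloor>"
  have D0: "0 \<le> D" unfolding D_def using r rho_pos by simp
  have KD: "real K \<le> D" unfolding K_def using of_nat_floor[OF D0] .
  have sub: "{p. p < m \<and> norm (lattice_pt m u v p - w) \<le> r} \<subseteq> {p0 - K..p0 + K} \<union> {m - K..<m} \<union> {..K}"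
  proof
    fix p assume "p \<in> {p. p < m \<and> norm (lattice_pt m u v p - w) \<le> r}"
    then have p: "p < m" "norm (lattice_pt m u v p - w) \<le> r" by auto
    have "norm (lattice_pt m u v p - lattice_pt m u v p0) \<le> r + r"
      using p(2) p0(2) by (intro norm_diff_triangle_le[of _ w]) (auto simp: norm_minus_commute)
    then obtain e where e: "(p0 \<le> p \<and> e = p - p0) \<or> (p < p0 \<and> e = p0 - p)" "real e \<le> (r + r) * real m / rho \<or> real (m - e) \<le> (r + r) * real m / rho" "e < m"
      using index_close[OF fr m p(1) p0(1)] by blast
    have "(r + r) * real m / rho = D" unfolding D_def by simp
    then have "e \<le> K \<or> m - e \<le> K" using e(2) le_nat_floor unfolding K_def by auto
    then show "p \<in> {p0 - K..p0 + K} \<union> {m - K..<m} \<union> {..K}" using e(1,3) p(1) p0(1) by auto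
  qed
  have fin: "finite ({p0 - K..p0 + K} \<union> {m - K..<m} \<union> {..K})" by simp
  have "card {p. p < m \<and> norm (lattice_pt m u v p - w) \<le> r} \<le> card ({p0 - K..p0 + K} \<union> {m - K..<m} \<union> {..K})"
    by (rule card_mono[OF fin sub])
  also have "\<dots> \<le> card {p0 - K..p0 + K} + card {m - K..<m} + card {..K}"
    by (meson card_Un_le add_le_mono le_refl order_trans)
  also have "\<dots> \<le> (2 * K + 1) + K + (K + 1)" by (intro add_mono) auto
  finally have "real (card {p. p < m \<and> norm (lattice_pt m u v p - w) \<le> r}) \<le> 4 * real K + 2" by linarith
  also have "\<dots> \<le> 4 * D + 2" using KD by simp
  finally show ?thesis unfolding D_def by simp
qed


lemma geo_bad:
  fixes a b c z :: pt
  assumes n: "norm a = rho" "norm b = rho" "norm c = rho" "norm z = rho"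
    and az: "sdist a z \<le> h" and bz: "sdist b z \<le> h" and far: "\<not> ((1 + \<Delta>) * sdist a b \<le> sdist c b)"
    and D: "0 \<le> \<Delta>"
  shows "sdist c z \<le> (3 + 2 * \<Delta>) * h"
proof -
  have "sdist a b \<le> sdist a z + sdist z b" by (rule sdist_tri) (use n in auto)
  also have "sdist z b = sdist b z" by (rule sdist_sym)
  finally have ab: "sdist a b \<le> 2 * h" using az bz by simp
  have "(1 + \<Delta>) * sdist a b \<le> (1 + \<Delta>) * (2 * h)" using ab D by (intro mult_left_mono) auto
  then have cb: "sdist c b \<le> (1 + \<Delta>) * (2 * h)" using far by simp
  have "sdist c z \<le> sdist c b + sdist b z" by (rule sdist_tri) (use n in auto)
  also have "\<dots> \<le> (1 + \<Delta>) * (2 * h) + h" using cb bz by simp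
  also have "\<dots> = (3 + 2 * \<Delta>) * h" by (simp add: algebra_simps)
  finally show ?thesis .
qed

lemma geo_A:
  assumes fr: "frame (x i) (u i) (v i)" and z1: "z1 \<in> great_circle (x i)" and z2: "z2 \<in> great_circle (x i)"
    and m: "m > 0" and c1: "closest m u v i p z1" and c2: "closest m u v i p z2"
  shows "sdist z2 z1 \<le> 2 * (rho * pi / real m)"
proof -
  have nL: "norm (loc m u v i p) = rho" unfolding loc_def by (rule lattice_norm[OF fr])
  have n1: "norm z1 = rho" and n2: "norm z2 = rho" using z1 z2 unfolding great_circle_def by auto
  have "sdist z2 z1 \<le> sdist z2 (loc m u v i p) + sdist (loc m u v i p) z1"
    by (rule sdist_tri[OF n2 nL n1])
  also have "sdist z2 (loc m u v i p) = sdist (loc m u v i p) z2" by (rule sdist_sym)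
  finally show ?thesis using closest_near[where x=x and u=u and v=v and k=i, OF fr z1 m c1] closest_near[where x=x and u=u and v=v and k=i, OF fr z2 m c2] by simp
qed



lemma shift_inj: "inj_on (\<lambda>k::nat. (k + c) mod m) {..<m}"
proof -
  have *: "a = b" if "a < (m::nat)" "b < m" "b \<le> a" "(a + c) mod m = (b + c) mod m" for a b
  proof (rule ccontr)
    assume "a \<noteq> b"
    then have ab: "0 < a - b" using that by auto
    have "m dvd (a + c) - (b + c)" using that by (subst mod_eq_dvd_iff_nat[symmetric]) auto
    then have "m dvd a - b" by simp
    then have "m \<le> a - b" using ab by (simp add: dvd_imp_le)
    then show False using that by auto
  qed
  show ?thesis by (rule inj_onI) (metis * lessThan_iff nat_le_linear)
qed

lemma walk_uniform:
  assumes m: "m > 0"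
  shows "walk_pmf m t = pmf_of_set {..<m}"
proof (induction t)
  case 0
  then show ?case by simp
next
  case (Suc t)
  have shift: "map_pmf (\<lambda>k. (k + c) mod m) (pmf_of_set {..<m}) = pmf_of_set {..<m}" for c
  proof -
    have inj: "inj_on (\<lambda>k. (k + c) mod m) {..<m}" by (rule shift_inj)
    have img: "(\<lambda>k. (k + c) mod m) ` {..<m} = {..<m}"
      by (rule endo_inj_surj[OF _ _ inj]) (use m in auto)
    show ?thesis using m by (subst map_pmf_of_set_inj[OF inj]) (auto simp: img)
  qed
  have "walk_pmf m (Suc t) = bind_pmf (pmf_of_set {..<m}) (walk_step m)" using Suc by simp
  also have "\<dots> = bind_pmf (pmf_of_set {..<m}) (\<lambda>k. bind_pmf (pmf_of_set {0, 1, 2::nat}) (\<lambda>d. return_pmf ((k + m - 1 + d) mod m)))"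
    unfolding walk_step_def map_pmf_def by simp
  also have "\<dots> = bind_pmf (pmf_of_set {0, 1, 2::nat}) (\<lambda>d. bind_pmf (pmf_of_set {..<m}) (\<lambda>k. return_pmf ((k + (m - 1 + d)) mod m)))"
    by (subst bind_commute_pmf) (use m in \<open>simp add: add.assoc\<close>)
  also have "\<dots> = bind_pmf (pmf_of_set {0, 1, 2::nat}) (\<lambda>d. pmf_of_set {..<m})"
    using shift unfolding map_pmf_def by simp
  also have "\<dots> = pmf_of_set {..<m}" by simp
  finally show ?case .
qed

lemma prob_bind_pmf:
  "measure_pmf.prob (bind_pmf M N) X = (\<integral>x. measure_pmf.prob (N x) X \<partial>M)"
proof -
  have "ennreal (measure_pmf.prob (bind_pmf M N) X) = emeasure (bind_pmf M N) X"
    by (simp add: measure_pmf.emeasure_eq_measure)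
  also have "\<dots> = (\<integral>\<^sup>+x. emeasure (N x) X \<partial>M)" by simp
  also have "\<dots> = (\<integral>\<^sup>+x. ennreal (measure_pmf.prob (N x) X) \<partial>M)"
    by (simp add: measure_pmf.emeasure_eq_measure)
  also have "\<dots> = ennreal (\<integral>x. measure_pmf.prob (N x) X \<partial>M)"
    by (intro nn_integral_eq_integral measure_pmf.integrable_const_bound[where B=1]) auto
  finally show ?thesis by (simp add: integral_nonneg)
qed

lemma slot_prob:
  "measure_pmf.prob (slot_pmf n m t act) E =
     (\<integral>pos. measure_pmf.prob (Pi_pmf {..<n} None (act pos)) {a. (pos, a) \<in> E} \<partial>positions_pmf n m t)"
proof -
  have "slot_pmf n m t act = bind_pmf (positions_pmf n m t) (\<lambda>pos. map_pmf (Pair pos) (Pi_pmf {..<n} None (act pos)))"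
    unfolding slot_pmf_def map_pmf_def by simp
  then show ?thesis by (simp add: prob_bind_pmf vimage_def)
qed

lemma cond_bound:
  fixes act :: "nat \<Rightarrow> nat option pmf"
  assumes i: "i < n" and B: "Bad \<subseteq> {..<n}" "i \<notin> Bad"
  shows "measure_pmf.prob (Pi_pmf {..<n} None act) {a. a i = Some j \<and> (\<forall>k\<in>Bad. a k = None)}
       \<ge> pmf (act i) (Some j) * (\<Prod>k\<in>Bad. pmf (act k) None)"
proof -
  define C where "C = (\<lambda>k. if k = i then {Some j} else if k \<in> Bad then {None} else UNIV)"
  have sub: "PiE_dflt {..<n} None C \<subseteq> {a. a i = Some j \<and> (\<forall>k\<in>Bad. a k = None)}"
    unfolding PiE_dflt_def C_def using i B by auto
  have "measure_pmf.prob (Pi_pmf {..<n} None act) (PiE_dflt {..<n} None C) = (\<Prod>k<n. measure_pmf.prob (act k) (C k))"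
    by (rule measure_Pi_pmf_PiE_dflt) simp
  also have "\<dots> = measure_pmf.prob (act i) (C i) * (\<Prod>k\<in>{..<n} - {i}. measure_pmf.prob (act k) (C k))"
    using i by (subst prod.remove[of _ i]) auto
  also have "(\<Prod>k\<in>{..<n} - {i}. measure_pmf.prob (act k) (C k)) = (\<Prod>k\<in>{..<n} - {i}. if k \<in> Bad then pmf (act k) None else 1)"
    by (intro prod.cong) (auto simp: C_def measure_pmf_single)
  also have "\<dots> = (\<Prod>k\<in>({..<n} - {i}) \<inter> Bad. pmf (act k) None)"
    by (rule prod.inter_restrict[symmetric]) simp
  also have "({..<n} - {i}) \<inter> Bad = Bad" using B by auto
  also have "measure_pmf.prob (act i) (C i) = pmf (act i) (Some j)" by (simp add: C_def measure_pmf_single)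
  finally have "measure_pmf.prob (Pi_pmf {..<n} None act) (PiE_dflt {..<n} None C) = pmf (act i) (Some j) * (\<Prod>k\<in>Bad. pmf (act k) None)" .
  moreover have "measure_pmf.prob (Pi_pmf {..<n} None act) (PiE_dflt {..<n} None C) \<le> measure_pmf.prob (Pi_pmf {..<n} None act) {a. a i = Some j \<and> (\<forall>k\<in>Bad. a k = None)}"
    by (rule measure_pmf.finite_measure_mono[OF sub]) simp
  ultimately show ?thesis by simp
qed


lemma pmf_bind_bernoulli:
  assumes "0 \<le> p" "p \<le> 1"
  shows "pmf (bind_pmf (bernoulli_pmf p) f) x = pmf (f True) x * p + pmf (f False) x * (1 - p)"
  using assms by (simp add: pmf_bind)

lemma actionA_some:
  assumes S: "S \<in> Src" and nb: "neighbors m u v z pos S R" and R: "R < n"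
    and p: "0 \<le> pD" "pD \<le> 1" and a: "0 \<le> \<alpha>" "\<alpha> \<le> 1"
  shows "pmf (actionA pD \<alpha> n m u v z Src pos S) (Some R) = pD * \<alpha> / card {j. j < n \<and> neighbors m u v z pos S j}"
proof -
  define N where "N = {j. j < n \<and> neighbors m u v z pos S j}"
  have RN: "R \<in> N" unfolding N_def using nb R by auto
  have fin: "finite N" unfolding N_def by simp
  have Nne: "N \<noteq> {}" using RN by auto
  have "actionA pD \<alpha> n m u v z Src pos S =
     bind_pmf (bernoulli_pmf pD) (\<lambda>act. if act \<and> N \<noteq> {} then
        bind_pmf (bernoulli_pmf \<alpha>) (\<lambda>a. if a then map_pmf Some (pmf_of_set N) else return_pmf None)
      else return_pmf None)"
    unfolding actionA_def N_def using S by (simp add: Let_def)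
  also have "pmf \<dots> (Some R) = pD * \<alpha> / card N"
    using p a Nne fin RN by (simp add: pmf_bind_bernoulli pmf_map_inj' pmf_of_set)
  finally show ?thesis unfolding N_def .
qed

lemma actionA_none:
  assumes p: "0 \<le> pD" "pD \<le> 1" and a: "0 \<le> \<alpha>" "\<alpha> \<le> 1"
  shows "pmf (actionA pD \<alpha> n m u v z Src pos k) None \<ge> 1 - pD"
proof (cases "k \<in> Src")
  case False
  then show ?thesis using p unfolding actionA_def by simp
next
  case True
  define N where "N = {j. j < n \<and> neighbors m u v z pos k j}"
  have "actionA pD \<alpha> n m u v z Src pos k =
     bind_pmf (bernoulli_pmf pD) (\<lambda>act. if act \<and> N \<noteq> {} then
        bind_pmf (bernoulli_pmf \<alpha>) (\<lambda>a. if a then map_pmf Some (pmf_of_set N) else return_pmf None)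
      else return_pmf None)"
    unfolding actionA_def N_def using True by (simp add: Let_def)
  also have "pmf \<dots> None \<ge> 1 - pD"
    using p by (simp add: pmf_bind_bernoulli pmf_nonneg)
  finally show ?thesis .
qed

lemma actionB_some:
  assumes nb: "neighbors m u v z pos R D" and D: "D < n" "D \<notin> Src"
    and p: "0 \<le> pD" "pD \<le> 1" and a: "0 \<le> \<alpha>" "\<alpha> \<le> 1"
  shows "pmf (actionB pD n m u v z Src pos R) (Some D) \<ge> pD * \<alpha> / card {j. j < n \<and> neighbors m u v z pos R j}"
proof -
  define N where "N = {d. d < n \<and> d \<notin> Src \<and> neighbors m u v z pos R d}"
  define N' where "N' = {j. j < n \<and> neighbors m u v z pos R j}"
  have RN: "D \<in> N" unfolding N_def using nb D by auto
  have fin: "finite N" unfolding N_def by simp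
  have Nne: "N \<noteq> {}" using RN by auto
  have NN': "card N \<le> card N'" unfolding N_def N'_def by (intro card_mono) auto
  have cN: "card N > 0" using fin Nne by (simp add: card_gt_0_iff)
  have "actionB pD n m u v z Src pos R =
     bind_pmf (bernoulli_pmf pD) (\<lambda>act. if act \<and> N \<noteq> {} then map_pmf Some (pmf_of_set N) else return_pmf None)"
    unfolding actionB_def N_def by (simp add: Let_def)
  also have "pmf \<dots> (Some D) = pD / card N"
    using p Nne fin RN by (simp add: pmf_bind_bernoulli pmf_map_inj' pmf_of_set)
  finally have e: "pmf (actionB pD n m u v z Src pos R) (Some D) = pD / card N" .
  have "pD * \<alpha> / card N' \<le> pD / card N'" using p a by (intro divide_right_mono) (auto simp: mult_left_le)
  also have "\<dots> \<le> pD / card N" using p cN NN' by (intro divide_left_mono) auto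
  finally show ?thesis unfolding e N'_def .
qed

lemma actionB_none:
  assumes p: "0 \<le> pD" "pD \<le> 1"
  shows "pmf (actionB pD n m u v z Src pos k) None \<ge> 1 - pD"
proof -
  define N where "N = {d. d < n \<and> d \<notin> Src \<and> neighbors m u v z pos k d}"
  have "actionB pD n m u v z Src pos k =
     bind_pmf (bernoulli_pmf pD) (\<lambda>act. if act \<and> N \<noteq> {} then map_pmf Some (pmf_of_set N) else return_pmf None)"
    unfolding actionB_def N_def by (simp add: Let_def)
  also have "pmf \<dots> None \<ge> 1 - pD"
    using p by (simp add: pmf_bind_bernoulli pmf_nonneg)
  finally show ?thesis .
qed


lemma powr_convex_bound:
  fixes w tau :: real
  assumes w: "0 < w" "w \<le> 1" and t: "0 \<le> tau" "tau \<le> 1"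
  shows "w powr tau \<le> 1 - (1 - w) * tau"
proof -
  have "exp ((1 - tau) *\<^sub>R 0 + tau *\<^sub>R ln w) \<le> (1 - tau) * exp 0 + tau * exp (ln w)"
    using convex_onD[OF exp_convex, of tau 0 "ln w"] t by simp
  then have "exp (tau * ln w) \<le> 1 - tau + tau * w" using w by simp
  moreover have "w powr tau = exp (tau * ln w)" using w by (simp add: powr_def mult.commute)
  ultimately show ?thesis by (simp add: algebra_simps)
qed

lemma num_bound:
  fixes c0 q :: real and a b Z :: nat
  assumes c0: "0 \<le> c0" and q: "0 < q" "q \<le> 1" and a: "1 \<le> a" "a \<le> Z + 1" and b: "b \<le> Z + 1"
  shows "c0 * q * (q / 2) ^ Z \<le> c0 / real a * q ^ b"
proof -
  have "Z + 1 \<le> (2::nat) ^ Z" by (induction Z) auto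
  then have a2: "real a \<le> 2 ^ Z" using a by (metis of_nat_le_iff order_trans of_nat_numeral of_nat_power)
  have "q * (q / 2) ^ Z = q ^ (Z + 1) / 2 ^ Z" by (simp add: power_divide)
  also have "\<dots> \<le> q ^ b / 2 ^ Z" using q b by (intro divide_right_mono power_decreasing) auto
  also have "\<dots> \<le> q ^ b / real a" using a a2 q by (intro divide_left_mono) auto
  finally have "q * (q / 2) ^ Z \<le> q ^ b / real a" .
  then have "c0 * (q * (q / 2) ^ Z) \<le> c0 * (q ^ b / real a)" using c0 by (rule mult_left_mono)
  then show ?thesis by simp
qed

lemma prod_split2:
  fixes F :: "nat \<Rightarrow> real"
  assumes "i < n" "j < n" "i \<noteq> j"
  shows "(\<Prod>k<n. F k) = F i * F j * (\<Prod>k\<in>{..<n} - {i, j}. F k)"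
proof -
  have "(\<Prod>k<n. F k) = F i * (\<Prod>k\<in>{..<n} - {i}. F k)" using assms by (subst prod.remove[of _ i]) auto
  also have "(\<Prod>k\<in>{..<n} - {i}. F k) = F j * (\<Prod>k\<in>({..<n} - {i}) - {j}. F k)"
    using assms by (subst prod.remove[of _ j]) auto
  also have "({..<n} - {i}) - {j} = {..<n} - {i, j}" by auto
  finally show ?thesis by simp
qed

lemma positions_eq:
  assumes "m > 0"
  shows "positions_pmf n m t = Pi_pmf {..<n} 0 (\<lambda>_. pmf_of_set {..<m})"
  unfolding positions_pmf_def using walk_uniform[OF assms] by simp

lemma positions_set:
  assumes "m > 0"
  shows "set_pmf (positions_pmf n m t) = PiE_dflt {..<n} 0 (\<lambda>_. {..<m})"
proof -
  have "{..<m} \<noteq> {}" using assms by auto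
  then show ?thesis unfolding positions_eq[OF assms] by (simp add: set_Pi_pmf o_def)
qed

lemma positions_finite:
  assumes "m > 0"
  shows "finite (set_pmf (positions_pmf n m t))"
  unfolding positions_set[OF assms] by auto

lemma expect_g:
  fixes w :: real
  assumes m: "m > 0" and R: "R \<subseteq> {..<m}"
  shows "measure_pmf.expectation (pmf_of_set {..<m}) (\<lambda>p. if p \<in> R then w else 1) = 1 - (1 - w) * (real (card R) / real m)"
proof -
  have fR: "finite R" using R finite_subset by blast
  have "(\<Sum>p<m. if p \<in> R then w else 1) = (\<Sum>p\<in>{..<m} \<inter> {p. p \<in> R}. w) + (\<Sum>p\<in>{..<m} \<inter> - {p. p \<in> R}. 1)"
    by (rule sum.If_cases) simp
  also have "{..<m} \<inter> - {p. p \<in> R} = {..<m} - R" by auto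
  also have "{..<m} \<inter> {p. p \<in> R} = {..<m} \<inter> R" by auto
  also have "{..<m} \<inter> R = R" using R by auto
  finally have s0: "(\<Sum>p<m. if p \<in> R then w else 1) = (\<Sum>p\<in>R. w) + (\<Sum>p\<in>{..<m} - R. 1)" .
  have "card ({..<m} - R) = m - card R" using R fR by (simp add: card_Diff_subset)
  then have s: "(\<Sum>p<m. if p \<in> R then w else 1) = w * card R + real (m - card R)" unfolding s0 by simp
  have cR: "card R \<le> m" using R card_mono[of "{..<m}" R] by simp
  have "measure_pmf.expectation (pmf_of_set {..<m}) (\<lambda>p. if p \<in> R then w else 1) = (\<Sum>p<m. if p \<in> R then w else 1) / real m"
    using m by (subst integral_pmf_of_set) auto
  also have "\<dots> = 1 - (1 - w) * (real (card R) / real m)" unfolding s using m cR by (simp add: of_nat_diff field_simps)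
  finally show ?thesis .
qed

lemma generic:
  fixes n m :: nat and x u v :: "nat \<Rightarrow> pt" and z :: "nat \<Rightarrow> nat \<Rightarrow> pt" and Src :: "nat set"
    and dst :: "nat \<Rightarrow> nat" and t i j :: nat
    and act :: "(nat \<Rightarrow> nat) \<Rightarrow> nat \<Rightarrow> nat option pmf"
    and Tx :: "(nat \<Rightarrow> nat) \<Rightarrow> (nat \<Rightarrow> nat option) \<Rightarrow> nat \<Rightarrow> bool"
    and c0 q \<Delta> K1 K2 :: real
  assumes nm: "n = m\<^sup>2" and n2: "2 \<le> n" and cfg: "config n x u v z Src dst" and typc: "typical K1 K2 \<Delta> n x z"
    and ij: "i < n" "j < n" "i \<noteq> j" and D: "0 < \<Delta>" and K2: "0 \<le> K2"
    and c0: "0 \<le> c0" and q: "0 < q" "q \<le> 1"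
    and asome: "\<And>pos. neighbors m u v z pos i j \<Longrightarrow> pmf (act pos i) (Some j) \<ge> c0 / card {l. l < n \<and> neighbors m u v z pos i l}"
    and anone: "\<And>pos k. pmf (act pos k) None \<ge> q"
    and tx: "\<And>pos a k. Tx pos a k \<Longrightarrow> a k \<noteq> None"
  shows "measure_pmf.prob (slot_pmf n m t act)
           {(pos, a). neighbors m u v z pos i j \<and> a i = Some j \<and> protocol_ok \<Delta> n m u v pos (Tx pos a) i j}
      \<ge> c0 * q * (q / 2) powr (K2 * (8 * pi * (4 + 2 * \<Delta>) + 4)) * measure_pmf.prob (positions_pmf n m t) {pos. neighbors m u v z pos i j}"
proof -
  define h where "h = rho * pi / real m"
  define w where "w = q / 2"
  define Cc where "Cc = 8 * pi * (4 + 2 * \<Delta>) + 4"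
  have m0: "m > 0" using n2 nm by (cases m) auto
  have mr: "real m > 0" using m0 by simp
  have h0: "0 < h" unfolding h_def using rho_pos mr by simp
  have w0: "0 < w" "w \<le> 1" unfolding w_def using q by auto
  have fr: "frame (x k) (u k) (v k)" if "k < n" for k using cfg that unfolding config_def frame_def by auto
  have zc: "z a b \<in> great_circle (x a) \<and> z a b \<in> great_circle (x b)" if "a < n" "b < n" "a \<noteq> b" for a b
    using cfg that unfolding config_def by auto
  have sqn: "sqrt (pi / real n) = 2 * h"
  proof -
    have "sqrt (pi / real n) = sqrt pi / real m" unfolding nm by (simp add: real_sqrt_divide)
    moreover have "2 * h = sqrt pi / real m" unfolding h_def rho_def using mr
      by (simp add: field_simps)
    ultimately show ?thesis by simp
  qed
  define Cl where "Cl = (\<lambda>l w. {p. p < m \<and> closest m u v l p w})"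
  define A where "A = (\<lambda>k. if (\<exists>p'. closest m u v i p' (z i j) \<and> closest m u v i p' (z i k)) then Cl k (z i k) else {})"
  define B where "B = (\<lambda>k. {p. p < m \<and> sdist (loc m u v k p) (z i j) \<le> (3 + 2 * \<Delta>) * h})"
  define Rel where "Rel = (\<lambda>k. A k \<union> B k)"
  define K where "K = {..<n} - {i, j}"
  define g where "g = (\<lambda>k p. if p \<in> Rel k then w else (1::real))"
  define f where "f = (\<lambda>k p. if k = i then indicator (Cl i (z i j)) p else if k = j then indicator (Cl j (z i j)) p else g k p)"
  define f0 where "f0 = (\<lambda>k p. if k = i then indicator (Cl i (z i j)) p else if k = j then indicator (Cl j (z i j)) p else (1::real))"
  define Circ where "Circ = {k. k < n \<and> great_circle (x k) \<inter> sdisk (z i j) ((2 + \<Delta>) * sqrt (pi / real n)) \<noteq> {}}"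
  define E where "E = {(pos, a). neighbors m u v z pos i j \<and> a i = Some j \<and> protocol_ok \<Delta> n m u v pos (Tx pos a) i j}"
  define P where "P = positions_pmf n m t"
  have zij: "z i j \<in> great_circle (x i)" "z i j \<in> great_circle (x j)" using zc[OF ij] by auto
  have nzij: "norm (z i j) = rho" using zij unfolding great_circle_def by auto
  have RelM: "Rel k \<subseteq> {..<m}" for k by (auto simp: Rel_def A_def B_def Cl_def)
  have nbr_iff: "neighbors m u v z pos i j \<longleftrightarrow> pos i \<in> Cl i (z i j) \<and> pos j \<in> Cl j (z i j)" for pos
    unfolding neighbors_def Cl_def closest_def using ij by auto
  have KC: "K \<subseteq> {..<n}" unfolding K_def by auto

  have cardRel: "real (card (Rel k)) \<le> Cc" if k: "k \<in> K" for k
  proof -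
    have kn: "k < n" "k \<noteq> i" using k unfolding K_def by auto
    have zk: "z i k \<in> great_circle (x k)" using zc[of i k] ij kn by auto
    have nzk: "norm (z i k) = rho" using zk unfolding great_circle_def by auto
    have A1: "A k \<subseteq> {p. p < m \<and> norm (lattice_pt m (u k) (v k) p - z i k) \<le> h}"
    proof
      fix p assume "p \<in> A k"
      then have p: "p < m" "closest m u v k p (z i k)" by (auto simp: A_def Cl_def split: if_splits)
      have "sdist (loc m u v k p) (z i k) \<le> h" unfolding h_def
        using closest_near[where x=x and u=u and v=v and k=k, OF fr[OF kn(1)] zk m0 p(2)] .
      moreover have "norm (loc m u v k p - z i k) \<le> sdist (loc m u v k p) (z i k)"
        by (rule chord_le_sdist) (use lattice_norm[OF fr[OF kn(1)]] nzk in \<open>auto simp: loc_def\<close>)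
      ultimately show "p \<in> {p. p < m \<and> norm (lattice_pt m (u k) (v k) p - z i k) \<le> h}" using p by (auto simp: loc_def)
    qed
    have B1: "B k \<subseteq> {p. p < m \<and> norm (lattice_pt m (u k) (v k) p - z i j) \<le> (3 + 2 * \<Delta>) * h}"
    proof
      fix p assume "p \<in> B k"
      then have p: "p < m" "sdist (loc m u v k p) (z i j) \<le> (3 + 2 * \<Delta>) * h" by (auto simp: B_def)
      moreover have "norm (loc m u v k p - z i j) \<le> sdist (loc m u v k p) (z i j)"
        by (rule chord_le_sdist) (use lattice_norm[OF fr[OF kn(1)]] nzij in \<open>auto simp: loc_def\<close>)
      ultimately show "p \<in> {p. p < m \<and> norm (lattice_pt m (u k) (v k) p - z i j) \<le> (3 + 2 * \<Delta>) * h}" by (auto simp: loc_def)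
    qed
    have c1: "real (card (A k)) \<le> 8 * h * real m / rho + 2"
      using card_mono[OF _ A1] count_ball[OF fr[OF kn(1)] m0, of h "z i k"] h0 by force
    have c2: "real (card (B k)) \<le> 8 * ((3 + 2 * \<Delta>) * h) * real m / rho + 2"
      using card_mono[OF _ B1] count_ball[OF fr[OF kn(1)] m0, of "(3 + 2 * \<Delta>) * h" "z i j"] h0 D by force
    have e1: "8 * h * real m / rho = 8 * pi" unfolding h_def using mr rho_pos by simp
    have e2: "8 * ((3 + 2 * \<Delta>) * h) * real m / rho = 8 * pi * (3 + 2 * \<Delta>)" unfolding h_def using mr rho_pos by simp
    have "card (Rel k) \<le> card (A k) + card (B k)" unfolding Rel_def by (rule card_Un_le)
    then have "real (card (Rel k)) \<le> real (card (A k)) + real (card (B k))" by linarith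
    also have "\<dots> \<le> 8 * pi + 2 + (8 * pi * (3 + 2 * \<Delta>) + 2)" using c1 c2 e1 e2 by linarith
    also have "\<dots> = Cc" unfolding Cc_def by (simp add: algebra_simps)
    finally show ?thesis .
  qed

  have relC: "k \<in> Circ" if k: "k \<in> K" and R: "Rel k \<noteq> {}" for k
  proof -
    have kn: "k < n" "k \<noteq> i" using k unfolding K_def by auto
    have zk: "z i k \<in> great_circle (x k)" "z i k \<in> great_circle (x i)" using zc[of i k] ij kn by auto
    have nzk: "norm (z i k) = rho" using zk unfolding great_circle_def by auto
    have rad: "(2 + \<Delta>) * sqrt (pi / real n) = (4 + 2 * \<Delta>) * h" unfolding sqn by (simp add: algebra_simps)
    show ?thesis
    proof (cases "A k = {}")
      case False
      then obtain p' where p': "closest m u v i p' (z i j)" "closest m u v i p' (z i k)"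
        unfolding A_def by (auto split: if_splits)
      have "sdist (z i k) (z i j) \<le> 2 * h" unfolding h_def
        by (rule geo_A[where x=x and u=u and v=v and i=i, OF fr[OF ij(1)] zij(1) zk(2) m0 p'])
      also have "\<dots> \<le> (4 + 2 * \<Delta>) * h" using h0 D by (intro mult_right_mono) auto
      finally have "z i k \<in> sdisk (z i j) ((2 + \<Delta>) * sqrt (pi / real n))"
        unfolding sdisk_def sphere2_def rad using nzk by auto
      then show ?thesis unfolding Circ_def using kn zk(1) by auto
    next
      case True
      then obtain p where p: "p \<in> B k" using R unfolding Rel_def by auto
      then have ps: "sdist (loc m u v k p) (z i j) \<le> (3 + 2 * \<Delta>) * h" by (auto simp: B_def)
      also have "\<dots> \<le> (4 + 2 * \<Delta>) * h" using h0 by (intro mult_right_mono) auto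
      finally have "loc m u v k p \<in> sdisk (z i j) ((2 + \<Delta>) * sqrt (pi / real n))"
        unfolding sdisk_def sphere2_def rad using lattice_norm[OF fr[OF kn(1)]] by (auto simp: loc_def)
      moreover have "loc m u v k p \<in> great_circle (x k)" unfolding loc_def by (rule lattice_circle[OF fr[OF kn(1)]])
      ultimately show ?thesis unfolding Circ_def using kn by auto
    qed
  qed

  have cardCirc: "real (card Circ) \<le> K2 * real m"
  proof -
    have "sqrt (real n) = real m" unfolding nm by simp
    then show ?thesis using typc ij unfolding typical_def Circ_def Let_def by auto
  qed

  have posP: "\<forall>k<n. pos k < m" if "pos \<in> set_pmf P" for pos
    using that unfolding P_def positions_set[OF m0] PiE_dflt_def by auto

  have pw: "c0 * q * (\<Prod>k<n. f k (pos k)) \<le> measure_pmf.prob (Pi_pmf {..<n} None (act pos)) {a. (pos, a) \<in> E}"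
    if pos: "pos \<in> set_pmf P" for pos
  proof (cases "neighbors m u v z pos i j")
    case False
    have "(\<Prod>k<n. f k (pos k)) = f i (pos i) * f j (pos j) * (\<Prod>k\<in>{..<n} - {i, j}. f k (pos k))"
      by (rule prod_split2[OF ij])
    also have "f i (pos i) * f j (pos j) = 0" using False ij unfolding nbr_iff f_def by (auto simp: indicator_def)
    finally have "(\<Prod>k<n. f k (pos k)) = 0" by simp
    then show ?thesis by (metis measure_nonneg mult_zero_right)
  next
    case True
    have posm: "\<forall>k<n. pos k < m" using posP[OF pos] .
    define N where "N = {l. l < n \<and> neighbors m u v z pos i l}"
    define Bad where "Bad = {k. k < n \<and> k \<noteq> i \<and> \<not> ((1 + \<Delta>) * sdist (loc m u v i (pos i)) (loc m u v j (pos j)) \<le> sdist (loc m u v k (pos k)) (loc m u v j (pos j)))}"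
    define ZS where "ZS = {k \<in> K. pos k \<in> Rel k}"
    have finZS: "finite ZS" unfolding ZS_def K_def by auto
    have cli: "closest m u v i (pos i) (z i j)" and clj: "closest m u v j (pos j) (z i j)"
      using True unfolding neighbors_def by auto
    have NZ: "N \<subseteq> insert j ZS"
    proof
      fix l assume "l \<in> N"
      then have l: "l < n" "neighbors m u v z pos i l" unfolding N_def by auto
      then have li: "l \<noteq> i" "closest m u v i (pos i) (z i l)" "closest m u v l (pos l) (z i l)"
        unfolding neighbors_def by auto
      show "l \<in> insert j ZS"
      proof (cases "l = j")
        case False
        have "pos l \<in> A l" unfolding A_def Cl_def using cli li posm l(1) by auto
        then show ?thesis using False l(1) li(1) unfolding ZS_def K_def Rel_def by auto
      qed simp
    qed
    have BZ: "Bad \<subseteq> insert j ZS"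
    proof
      fix k assume "k \<in> Bad"
      then have k: "k < n" "k \<noteq> i" "\<not> ((1 + \<Delta>) * sdist (loc m u v i (pos i)) (loc m u v j (pos j)) \<le> sdist (loc m u v k (pos k)) (loc m u v j (pos j)))"
        unfolding Bad_def by auto
      show "k \<in> insert j ZS"
      proof (cases "k = j")
        case False
        have nl: "norm (loc m u v a (pos a)) = rho" if "a < n" for a
          unfolding loc_def by (rule lattice_norm[OF fr[OF that]])
        have "sdist (loc m u v k (pos k)) (z i j) \<le> (3 + 2 * \<Delta>) * h"
          by (rule geo_bad[OF nl[OF ij(1)] nl[OF ij(2)] nl[OF k(1)] nzij _ _ k(3)])
             (use closest_near[where x=x and u=u and v=v and k=i, OF fr[OF ij(1)] zij(1) m0 cli]
                  closest_near[where x=x and u=u and v=v and k=j, OF fr[OF ij(2)] zij(2) m0 clj] D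
              in \<open>auto simp: h_def\<close>)
        then have "pos k \<in> B k" unfolding B_def using posm k(1) by auto
        then show ?thesis using False k unfolding ZS_def K_def Rel_def by auto
      qed simp
    qed
    have jN: "j \<in> N" unfolding N_def using True ij by auto
    have finN: "finite N" unfolding N_def by auto
    have cN1: "1 \<le> card N" using jN finN by (metis One_nat_def Suc_leI card_gt_0_iff empty_iff)
    have cN2: "card N \<le> card ZS + 1"
      using card_mono[OF _ NZ] finZS card_insert_le_m1 by (metis Suc_eq_plus1 card_insert_if finite_insert le_SucI order_trans)
    have cB: "card Bad \<le> card ZS + 1"
      using card_mono[OF _ BZ] finZS by (metis Suc_eq_plus1 card_insert_if finite_insert le_SucI order_trans)
    have Bn: "Bad \<subseteq> {..<n}" "i \<notin> Bad" unfolding Bad_def by auto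
    have sub: "{a. a i = Some j \<and> (\<forall>k\<in>Bad. a k = None)} \<subseteq> {a. (pos, a) \<in> E}"
    proof
      fix a assume a: "a \<in> {a. a i = Some j \<and> (\<forall>k\<in>Bad. a k = None)}"
      have "protocol_ok \<Delta> n m u v pos (Tx pos a) i j"
        unfolding protocol_ok_def
      proof (intro allI impI)
        fix k assume k0: "k < n" and k1: "k \<noteq> i \<and> Tx pos a k"
        have k: "k < n \<and> k \<noteq> i \<and> Tx pos a k" using k0 k1 by auto
        show "(1 + \<Delta>) * sdist (loc m u v i (pos i)) (loc m u v j (pos j)) \<le> sdist (loc m u v k (pos k)) (loc m u v j (pos j))"
        proof (rule ccontr)
          assume "\<not> ?thesis"
          then have "k \<in> Bad" unfolding Bad_def using k by auto
          then have "a k = None" using a by auto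
          then show False using tx k by blast
        qed
      qed
      then show "a \<in> {a. (pos, a) \<in> E}" unfolding E_def using True a by auto
    qed
    have "q ^ card Bad = (\<Prod>k\<in>Bad. q)" by simp
    also have "\<dots> \<le> (\<Prod>k\<in>Bad. pmf (act pos k) None)" using anone q by (intro prod_mono) auto
    finally have pB: "q ^ card Bad \<le> (\<Prod>k\<in>Bad. pmf (act pos k) None)" .
    have "c0 / real (card N) * q ^ card Bad \<le> pmf (act pos i) (Some j) * (\<Prod>k\<in>Bad. pmf (act pos k) None)"
      using asome[OF True] pB c0 q unfolding N_def by (intro mult_mono) auto
    also have "\<dots> \<le> measure_pmf.prob (Pi_pmf {..<n} None (act pos)) {a. a i = Some j \<and> (\<forall>k\<in>Bad. a k = None)}"
      by (rule cond_bound[OF ij(1) Bn])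
    also have "\<dots> \<le> measure_pmf.prob (Pi_pmf {..<n} None (act pos)) {a. (pos, a) \<in> E}"
      by (rule measure_pmf.finite_measure_mono[OF sub]) simp
    finally have L: "c0 / real (card N) * q ^ card Bad \<le> measure_pmf.prob (Pi_pmf {..<n} None (act pos)) {a. (pos, a) \<in> E}" .
    have "(\<Prod>k<n. f k (pos k)) = f i (pos i) * f j (pos j) * (\<Prod>k\<in>{..<n} - {i, j}. f k (pos k))"
      by (rule prod_split2[OF ij])
    also have "f i (pos i) * f j (pos j) = 1" using True ij unfolding nbr_iff f_def by auto
    also have "(\<Prod>k\<in>{..<n} - {i, j}. f k (pos k)) = (\<Prod>k\<in>K. if k \<in> {k. pos k \<in> Rel k} then w else 1)"
      unfolding K_def f_def g_def by (intro prod.cong) auto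
    also have "\<dots> = (\<Prod>k\<in>K \<inter> {k. pos k \<in> Rel k}. w)"
      by (rule prod.inter_restrict[symmetric]) (simp add: K_def)
    also have "\<dots> = w ^ card ZS" unfolding ZS_def by (simp add: Int_def)
    finally have pf: "(\<Prod>k<n. f k (pos k)) = w ^ card ZS" by simp
    have "c0 * q * (\<Prod>k<n. f k (pos k)) \<le> c0 / real (card N) * q ^ card Bad"
      unfolding pf w_def by (rule num_bound[OF c0 q cN1 cN2 cB])
    then show ?thesis using L by linarith
  qed

  have finP: "finite (set_pmf P)" unfolding P_def by (rule positions_finite[OF m0])
  have PP: "P = Pi_pmf {..<n} 0 (\<lambda>_. pmf_of_set {..<m})" unfolding P_def by (rule positions_eq[OF m0])
  have setU: "set_pmf (pmf_of_set {..<m}) = {..<m}" by (rule set_pmf_of_set) (use m0 in auto)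
  have finU: "finite (set_pmf (pmf_of_set {..<m}))" unfolding setU by simp
  have fnn: "0 \<le> f k p" for k p using w0 unfolding f_def g_def by (auto simp: indicator_def)

  have I1: "measure_pmf.prob (slot_pmf n m t act) E = (\<integral>pos. measure_pmf.prob (Pi_pmf {..<n} None (act pos)) {a. (pos, a) \<in> E} \<partial>P)"
    unfolding P_def by (rule slot_prob)
  have I2: "(\<integral>pos. c0 * q * (\<Prod>k<n. f k (pos k)) \<partial>P) \<le> (\<integral>pos. measure_pmf.prob (Pi_pmf {..<n} None (act pos)) {a. (pos, a) \<in> E} \<partial>P)"
    by (rule integral_mono_AE) (auto intro!: integrable_measure_pmf_finite[OF finP] AE_pmfI pw)
  have I3: "(\<integral>pos. c0 * q * (\<Prod>k<n. f k (pos k)) \<partial>P) = c0 * q * (\<Prod>k<n. measure_pmf.expectation (pmf_of_set {..<m}) (f k))"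
  proof -
    have "(\<integral>pos. (\<Prod>k<n. f k (pos k)) \<partial>P) = (\<Prod>k<n. measure_pmf.expectation (pmf_of_set {..<m}) (f k))"
      unfolding PP by (rule expectation_prod_Pi_pmf) (auto intro!: integrable_measure_pmf_finite[OF finU] fnn)
    then show ?thesis by simp
  qed
  have I4: "measure_pmf.prob P {pos. neighbors m u v z pos i j} = (\<Prod>k<n. measure_pmf.expectation (pmf_of_set {..<m}) (f0 k))"
  proof -
    have "measure_pmf.prob P {pos. neighbors m u v z pos i j} = (\<integral>pos. indicator {pos. neighbors m u v z pos i j} pos \<partial>P)"
      by simp
    also have "\<dots> = (\<integral>pos. (\<Prod>k<n. f0 k (pos k)) \<partial>P)"
    proof (rule integral_cong_AE)
      show "AE pos in P. indicator {pos. neighbors m u v z pos i j} pos = (\<Prod>k<n. f0 k (pos k))"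
      proof (rule AE_pmfI)
        fix pos assume "pos \<in> set_pmf P"
        have "(\<Prod>k<n. f0 k (pos k)) = f0 i (pos i) * f0 j (pos j) * (\<Prod>k\<in>{..<n} - {i, j}. f0 k (pos k))"
          by (rule prod_split2[OF ij])
        also have "(\<Prod>k\<in>{..<n} - {i, j}. f0 k (pos k)) = 1" unfolding f0_def by (intro prod.neutral) auto
        finally show "indicator {pos. neighbors m u v z pos i j} pos = (\<Prod>k<n. f0 k (pos k))"
          using ij unfolding nbr_iff f0_def by (auto simp: indicator_def)
      qed
    qed auto
    also have "\<dots> = (\<Prod>k<n. measure_pmf.expectation (pmf_of_set {..<m}) (f0 k))"
      unfolding PP by (rule expectation_prod_Pi_pmf) (auto intro!: integrable_measure_pmf_finite[OF finU] simp: f0_def indicator_def)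
    finally show ?thesis .
  qed
  define Ei where "Ei = measure_pmf.expectation (pmf_of_set {..<m}) (f i)"
  define Ej where "Ej = measure_pmf.expectation (pmf_of_set {..<m}) (f j)"
  have Ei0: "0 \<le> Ei" "0 \<le> Ej" unfolding Ei_def Ej_def using fnn by (auto intro!: integral_nonneg_AE)
  have f0i: "f0 i = f i" "f0 j = f j" unfolding f0_def f_def using ij by auto
  have pnb: "measure_pmf.prob P {pos. neighbors m u v z pos i j} = Ei * Ej"
  proof -
    have "(\<Prod>k<n. measure_pmf.expectation (pmf_of_set {..<m}) (f0 k)) =
       measure_pmf.expectation (pmf_of_set {..<m}) (f0 i) * measure_pmf.expectation (pmf_of_set {..<m}) (f0 j) *
       (\<Prod>k\<in>{..<n} - {i, j}. measure_pmf.expectation (pmf_of_set {..<m}) (f0 k))"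
      by (rule prod_split2[OF ij])
    also have "(\<Prod>k\<in>{..<n} - {i, j}. measure_pmf.expectation (pmf_of_set {..<m}) (f0 k)) = 1"
      unfolding f0_def by (intro prod.neutral) auto
    finally show ?thesis unfolding I4 f0i Ei_def Ej_def by simp
  qed
  define tau where "tau = (\<lambda>k. real (card (Rel k)) / real m)"
  have Eg: "measure_pmf.expectation (pmf_of_set {..<m}) (f k) = 1 - (1 - w) * tau k" if "k \<in> K" for k
  proof -
    have "f k = (\<lambda>p. if p \<in> Rel k then w else 1)" using that unfolding f_def g_def K_def by auto
    then show ?thesis unfolding tau_def using expect_g[OF m0 RelM] by simp
  qed
  have tau01: "0 \<le> tau k" "tau k \<le> 1" for k
  proof -
    have "card (Rel k) \<le> m" using card_mono[OF _ RelM[of k]] by simp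
    then show "0 \<le> tau k" "tau k \<le> 1" unfolding tau_def using mr by auto
  qed
  have prodK: "w powr (K2 * Cc) \<le> (\<Prod>k\<in>K. measure_pmf.expectation (pmf_of_set {..<m}) (f k))"
  proof -
    have "(\<Sum>k\<in>K. tau k) = (\<Sum>k\<in>K \<inter> Circ. tau k)"
    proof (rule sum.mono_neutral_right)
      show "\<forall>k\<in>K - K \<inter> Circ. tau k = 0"
      proof
        fix k assume "k \<in> K - K \<inter> Circ"
        then have "Rel k = {}" using relC by auto
        then show "tau k = 0" unfolding tau_def by simp
      qed
    qed (auto simp: K_def)
    also have "\<dots> \<le> (\<Sum>k\<in>K \<inter> Circ. Cc / real m)"
      using cardRel mr unfolding tau_def by (intro sum_mono divide_right_mono) auto
    also have "\<dots> = real (card (K \<inter> Circ)) * (Cc / real m)" by simp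
    also have "\<dots> \<le> real (card Circ) * (Cc / real m)"
    proof (intro mult_right_mono)
      show "real (card (K \<inter> Circ)) \<le> real (card Circ)" unfolding Circ_def by (intro of_nat_mono card_mono) auto
      show "0 \<le> Cc / real m" unfolding Cc_def using D mr by (auto intro!: divide_nonneg_pos add_nonneg_nonneg mult_nonneg_nonneg)
    qed
    also have "\<dots> \<le> (K2 * real m) * (Cc / real m)"
      using cardCirc D mr unfolding Cc_def by (intro mult_right_mono) (auto intro!: divide_nonneg_pos add_nonneg_nonneg mult_nonneg_nonneg)
    also have "\<dots> = K2 * Cc" using mr by simp
    finally have st: "(\<Sum>k\<in>K. tau k) \<le> K2 * Cc" .
    have "w powr (K2 * Cc) \<le> w powr (\<Sum>k\<in>K. tau k)" using st w0 by (intro powr_mono') auto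
    also have "\<dots> = (\<Prod>k\<in>K. w powr tau k)" using w0 by (simp add: powr_sum)
    also have "\<dots> \<le> (\<Prod>k\<in>K. measure_pmf.expectation (pmf_of_set {..<m}) (f k))"
    proof (rule prod_mono)
      fix k assume k: "k \<in> K"
      show "0 \<le> w powr tau k \<and> w powr tau k \<le> measure_pmf.expectation (pmf_of_set {..<m}) (f k)"
        using powr_convex_bound[OF w0 tau01[of k]] Eg[OF k] by simp
    qed
    finally show ?thesis .
  qed
  have "c0 * q * (Ei * Ej) * w powr (K2 * Cc) \<le> c0 * q * (Ei * Ej) * (\<Prod>k\<in>K. measure_pmf.expectation (pmf_of_set {..<m}) (f k))"
    using prodK c0 q Ei0 by (intro mult_left_mono) auto
  also have "\<dots> = c0 * q * (\<Prod>k<n. measure_pmf.expectation (pmf_of_set {..<m}) (f k))"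
    unfolding prod_split2[OF ij, of "\<lambda>k. measure_pmf.expectation (pmf_of_set {..<m}) (f k)"] Ei_def Ej_def K_def
    by (simp add: mult.assoc)
  also have "\<dots> \<le> measure_pmf.prob (slot_pmf n m t act) E" unfolding I1 I3[symmetric] by (rule I2)
  finally show ?thesis unfolding E_def pnb[unfolded P_def] w_def Cc_def by (simp add: mult_ac)
qed

theorem lemma2:
  fixes pD \<alpha> \<Delta> K1 K2 :: real
  assumes "0 < pD" "pD < 1" "0 < \<alpha>" "\<alpha> < 1" "0 < \<Delta>" "0 < K1" "K1 \<le> K2"
  shows "\<exists>c>0. \<forall>n m x u v z Src dst t.
     n = m\<^sup>2 \<longrightarrow> even n \<longrightarrow> 2 \<le> n \<longrightarrow> config n x u v z Src dst \<longrightarrow> typical K1 K2 \<Delta> n x z \<longrightarrow>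
     (\<forall>S\<in>Src. \<forall>R<n.
        measure_pmf.prob (slot_pmf n m t (actionA pD \<alpha> n m u v z Src))
          {(pos, a). neighbors m u v z pos S R \<and> a S = Some R
                     \<and> protocol_ok \<Delta> n m u v pos (\<lambda>k. a k \<noteq> None) S R}
        \<ge> c * measure_pmf.prob (positions_pmf n m t) {pos. neighbors m u v z pos S R})
   \<and> (\<forall>R<n. \<forall>D<n. D \<notin> Src \<longrightarrow> (\<forall>hasp :: (nat \<Rightarrow> nat) \<Rightarrow> nat \<Rightarrow> nat \<Rightarrow> bool.
        measure_pmf.prob (slot_pmf n m t (actionB pD n m u v z Src))
          {(pos, a). neighbors m u v z pos R D \<and> a R = Some D
                     \<and> protocol_ok \<Delta> n m u v pos (\<lambda>k. \<exists>d. a k = Some d \<and> hasp pos k d) R D}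
        \<ge> c * measure_pmf.prob (positions_pmf n m t) {pos. neighbors m u v z pos R D}))"
proof -
  define q where "q = 1 - pD"
  define c where "c = pD * \<alpha> * q * (q / 2) powr (K2 * (8 * pi * (4 + 2 * \<Delta>) + 4))"
  have q: "0 < q" "q \<le> 1" unfolding q_def using assms by auto
  have c0: "0 \<le> pD * \<alpha>" using assms by simp
  have K2: "0 \<le> K2" using assms by simp
  have cpos: "c > 0" unfolding c_def using assms q by simp
  have pd: "0 \<le> pD" "pD \<le> 1" "0 \<le> \<alpha>" "\<alpha> \<le> 1" using assms by auto
  show ?thesis
  proof (intro exI[of _ c] conjI allI impI ballI cpos)
    fix n m x u v z Src dst t
    assume nm: "n = m\<^sup>2" and ev: "even n" and n2: "2 \<le> n" and cfg: "config n x u v z Src dst"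
      and typc: "typical K1 K2 \<Delta> n x z"
    have SrcN: "Src \<subseteq> {..<n}" using cfg unfolding config_def by auto
    {
      fix S R assume S: "S \<in> Src" and R: "R < n"
      show "measure_pmf.prob (slot_pmf n m t (actionA pD \<alpha> n m u v z Src))
          {(pos, a). neighbors m u v z pos S R \<and> a S = Some R
                     \<and> protocol_ok \<Delta> n m u v pos (\<lambda>k. a k \<noteq> None) S R}
        \<ge> c * measure_pmf.prob (positions_pmf n m t) {pos. neighbors m u v z pos S R}"
      proof (cases "S = R")
        case True
        then have "{pos. neighbors m u v z pos S R} = {}" unfolding neighbors_def by auto
        then show ?thesis by simp
      next
        case False
        have Sn: "S < n" using S SrcN by auto
        have "pD * \<alpha> * q * (q / 2) powr (K2 * (8 * pi * (4 + 2 * \<Delta>) + 4)) * measure_pmf.prob (positions_pmf n m t) {pos. neighbors m u v z pos S R}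
          \<le> measure_pmf.prob (slot_pmf n m t (actionA pD \<alpha> n m u v z Src))
           {(pos, a). neighbors m u v z pos S R \<and> a S = Some R \<and> protocol_ok \<Delta> n m u v pos ((\<lambda>pos a k. a k \<noteq> None) pos a) S R}"
        proof (rule generic[OF nm n2 cfg typc Sn R False assms(5) K2 c0 q])
          fix pos assume "neighbors m u v z pos S R"
          then show "pD * \<alpha> / real (card {l. l < n \<and> neighbors m u v z pos S l}) \<le> pmf (actionA pD \<alpha> n m u v z Src pos S) (Some R)"
            using actionA_some[OF S _ R pd] by simp
        next
          fix pos k show "q \<le> pmf (actionA pD \<alpha> n m u v z Src pos k) None"
            unfolding q_def by (rule actionA_none[OF pd])
        qed auto
        then show ?thesis unfolding c_def by simp
      qed
    }
    {
      fix R D and hasp :: "(nat \<Rightarrow> nat) \<Rightarrow> nat \<Rightarrow> nat \<Rightarrow> bool"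
      assume R: "R < n" and D: "D < n" and DS: "D \<notin> Src"
      show "measure_pmf.prob (slot_pmf n m t (actionB pD n m u v z Src))
          {(pos, a). neighbors m u v z pos R D \<and> a R = Some D
                     \<and> protocol_ok \<Delta> n m u v pos (\<lambda>k. \<exists>d. a k = Some d \<and> hasp pos k d) R D}
        \<ge> c * measure_pmf.prob (positions_pmf n m t) {pos. neighbors m u v z pos R D}"
      proof (cases "R = D")
        case True
        then have "{pos. neighbors m u v z pos R D} = {}" unfolding neighbors_def by auto
        then show ?thesis by simp
      next
        case False
        have "pD * \<alpha> * q * (q / 2) powr (K2 * (8 * pi * (4 + 2 * \<Delta>) + 4)) * measure_pmf.prob (positions_pmf n m t) {pos. neighbors m u v z pos R D}
          \<le> measure_pmf.prob (slot_pmf n m t (actionB pD n m u v z Src))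
           {(pos, a). neighbors m u v z pos R D \<and> a R = Some D \<and> protocol_ok \<Delta> n m u v pos ((\<lambda>pos a k. \<exists>d. a k = Some d \<and> hasp pos k d) pos a) R D}"
        proof (rule generic[OF nm n2 cfg typc R D False assms(5) K2 c0 q])
          fix pos assume "neighbors m u v z pos R D"
          then show "pD * \<alpha> / real (card {l. l < n \<and> neighbors m u v z pos R l}) \<le> pmf (actionB pD n m u v z Src pos R) (Some D)"
            using actionB_some[OF _ D DS pd] by simp
        next
          fix pos k show "q \<le> pmf (actionB pD n m u v z Src pos k) None"
            unfolding q_def by (rule actionB_none[OF pd(1,2)])
        qed auto
        then show ?thesis unfolding c_def by simp
      qed
    }
  qed
qed

end
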